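(* Let $0<\mu\le L$ and $C>0$. Let $f_1,f_2,\dots:\mathbb{R}^d\to\mathbb{R}$ be differentiable functions, each $L$-smooth and $\mu$-strongly convex, whose minimizers $\mathbf{w}^*_t=\arg\min_{\mathbf{w}} f_t(\mathbf{w})$ satisfy $\|\mathbf{w}^*_t\|\le C$ for all $t\ge1$. For each $t\ge1$ let weights $a_1(t),\dots,a_t(t)\in[0,1]$ satisfy $\sum_{i=1}^t a_i(t)=1$, let $F_t(\mathbf{w})=\sum_{i=1}^t a_i(t)f_i(\mathbf{w})$ and $\overline{\mathbf{w}}^*_t=\arg\min_{\mathbf{w}}F_t(\mathbf{w})$. Then for all $t\ge1$, $$\|\overline{\mathbf{w}}^*_t\|^2\le\frac{L}{\mu}C^2.$$
   Context: A function $f$ is $L$-smooth if $\|\nabla f(\mathbf{x})-\nabla f(\mathbf{y})\|\le L\|\mathbf{x}-\mathbf{y}\|$ for all $\mathbf{x},\mathbf{y}$, and $\mu$-strongly convex if $f(\mathbf{y})\ge f(\mathbf{x})+\nabla f(\mathbf{x})^\top(\mathbf{y}-\mathbf{x})+\frac{\mu}{2}\|\mathbf{y}-\mathbf{x}\|^2$ for all $\mathbf{x},\mathbf{y}$. *)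

theory Defs
  imports "HOL-Analysis.Analysis"
begin

definition has_gradient :: "('a::euclidean_space \<Rightarrow> real) \<Rightarrow> ('a \<Rightarrow> 'a) \<Rightarrow> bool" where
  "has_gradient f g \<longleftrightarrow> (\<forall>x. (f has_derivative (\<lambda>h. g x \<bullet> h)) (at x))"

definition L_smooth :: "real \<Rightarrow> ('a::euclidean_space \<Rightarrow> 'a) \<Rightarrow> bool" where
  "L_smooth L g \<longleftrightarrow> (\<forall>x y. norm (g x - g y) \<le> L * norm (x - y))"

definition strongly_convex_grad ::
  "real \<Rightarrow> ('a::euclidean_space \<Rightarrow> real) \<Rightarrow> ('a \<Rightarrow> 'a) \<Rightarrow> bool" where
  "strongly_convex_grad \<mu> f g \<longleftrightarrow>
     (\<forall>x y. f y \<ge> f x + g x \<bullet> (y - x) + \<mu> / 2 * (norm (y - x))\<^sup>2)"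

definition is_minimizer :: "('a \<Rightarrow> real) \<Rightarrow> 'a \<Rightarrow> bool" where
  "is_minimizer f w \<longleftrightarrow> (\<forall>v. f w \<le> f v)"

end

theory Submission
  imports Defs
begin
lemma descent:
  fixes f :: "'a::euclidean_space \<Rightarrow> real"
  assumes hg: "has_gradient f g" and ls: "L_smooth L g"
  shows "f y \<le> f x + g x \<bullet> (y - x) + L / 2 * (norm (y - x))\<^sup>2"
proof -
  define v where "v = y - x"
  define \<phi> where "\<phi> = (\<lambda>s::real. f (x + s *\<^sub>R v) - s * (g x \<bullet> v) - L / 2 * s\<^sup>2 * (norm v)\<^sup>2)"
  have d: "(\<phi> has_real_derivative (g (x + s *\<^sub>R v) \<bullet> v - g x \<bullet> v - L * s * (norm v)\<^sup>2)) (at s)" for s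
  proof -
    have f1: "(f has_derivative (\<lambda>h. g (x + s *\<^sub>R v) \<bullet> h)) (at (x + s *\<^sub>R v))"
      using hg unfolding has_gradient_def by blast
    have l1: "((\<lambda>s. x + s *\<^sub>R v) has_derivative (\<lambda>h. h *\<^sub>R v)) (at s)"
      by (auto intro!: derivative_eq_intros)
    have "((\<lambda>s. f (x + s *\<^sub>R v)) has_derivative (\<lambda>h. g (x + s *\<^sub>R v) \<bullet> (h *\<^sub>R v))) (at s)"
      using has_derivative_compose[OF l1 f1] by (simp add: o_def)
    hence "((\<lambda>s. f (x + s *\<^sub>R v)) has_real_derivative (g (x + s *\<^sub>R v) \<bullet> v)) (at s)"
      unfolding has_field_derivative_def
      by (rule has_derivative_eq_rhs) (auto simp: mult.commute)
    then show ?thesis unfolding \<phi>_def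
      by (auto intro!: derivative_eq_intros)
  qed
  have le: "g (x + s *\<^sub>R v) \<bullet> v - g x \<bullet> v - L * s * (norm v)\<^sup>2 \<le> 0" if "0 \<le> s" for s
  proof -
    have "g (x + s *\<^sub>R v) \<bullet> v - g x \<bullet> v = (g (x + s *\<^sub>R v) - g x) \<bullet> v" by (simp add: inner_diff_left)
    also have "\<dots> \<le> norm (g (x + s *\<^sub>R v) - g x) * norm v" by (rule norm_cauchy_schwarz)
    also have "\<dots> \<le> L * norm (s *\<^sub>R v) * norm v"
      using ls unfolding L_smooth_def by (metis add_diff_cancel_left' mult_right_mono norm_ge_zero)
    also have "\<dots> = L * s * (norm v)\<^sup>2" using that by (simp add: power2_eq_square)
    finally show ?thesis by simp
  qed
  have "\<phi> 1 \<le> \<phi> 0"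
    by (rule DERIV_nonpos_imp_nonincreasing[of 0 1]) (simp, use d le in blast)
  then show ?thesis unfolding \<phi>_def v_def by simp
qed

lemma cocoercive:
  fixes h :: "'a::euclidean_space \<Rightarrow> real"
  assumes lo: "\<And>x y. h y \<ge> h x + G x \<bullet> (y - x)"
    and up: "\<And>x y. h y \<le> h x + G x \<bullet> (y - x) + K / 2 * (norm (y - x))\<^sup>2"
    and K: "K \<ge> 0"
  shows "(norm (G a - G b))\<^sup>2 \<le> K * ((G a - G b) \<bullet> (a - b))"
proof -
  define u where "u = G a - G b"
  have side: "h b - G b \<bullet> b \<le> h a - G b \<bullet> a - (t - K * t\<^sup>2 / 2) * (norm v)\<^sup>2"
    if u: "v = G a - G b" for a b t v
  proof -
    have "h (a - t *\<^sub>R v) \<ge> h b + G b \<bullet> ((a - t *\<^sub>R v) - b)"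
      using lo[where x=b and y="a - t *\<^sub>R v"] by simp
    moreover have "h (a - t *\<^sub>R v) \<le> h a + G a \<bullet> (- t *\<^sub>R v) + K / 2 * (norm (t *\<^sub>R v))\<^sup>2"
      using up[where x=a and y="a - t *\<^sub>R v"] by simp
    moreover have "(norm (t *\<^sub>R v))\<^sup>2 = t\<^sup>2 * (norm v)\<^sup>2"
      by (simp add: power_mult_distrib)
    moreover have "(norm v)\<^sup>2 = v \<bullet> v" by (simp add: power2_norm_eq_inner)
    moreover have "G b \<bullet> ((a - t *\<^sub>R v) - b) = G b \<bullet> a - G b \<bullet> b - t * (G b \<bullet> v)"
      by (simp add: inner_diff_right inner_add_right)
    moreover have "G a \<bullet> (- t *\<^sub>R v) = - t * (G a \<bullet> v)" by simp
    moreover have "G a \<bullet> v - G b \<bullet> v = v \<bullet> v" using u by (simp add: inner_diff_left)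
    ultimately show ?thesis by (simp add: algebra_simps)
  qed
  have key: "(2 * t - K * t\<^sup>2) * (norm u)\<^sup>2 \<le> u \<bullet> (a - b)" for t
  proof -
    have s1: "h b - G b \<bullet> b \<le> h a - G b \<bullet> a - (t - K * t\<^sup>2 / 2) * (norm u)\<^sup>2"
      using side[OF u_def] .
    have "G b - G a = - u" using u_def by simp
    hence "(norm (G b - G a))\<^sup>2 = (norm u)\<^sup>2" by simp
    hence s2: "h a - G a \<bullet> a \<le> h b - G a \<bullet> b - (t - K * t\<^sup>2 / 2) * (norm u)\<^sup>2"
      using side[where a=b and b=a and t=t and v="G b - G a"] by simp
    have "u \<bullet> (a - b) = G a \<bullet> a - G a \<bullet> b - G b \<bullet> a + G b \<bullet> b"
      using u_def by (simp add: inner_diff_left inner_diff_right)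
    then show ?thesis using s1 s2 by (simp add: algebra_simps)
  qed
  show ?thesis
  proof (cases "K > 0")
    case True
    have "(2 * (1/K) - K * (1/K)\<^sup>2) * (norm u)\<^sup>2 \<le> u \<bullet> (a - b)" by (rule key)
    moreover have "2 * (1/K) - K * (1/K)\<^sup>2 = 1 / K" using True by (simp add: power2_eq_square field_simps)
    ultimately have "(norm u)\<^sup>2 / K \<le> u \<bullet> (a - b)" by simp
    then show ?thesis using True u_def by (simp add: field_simps)
  next
    case False
    hence K0: "K = 0" using K by simp
    have "(norm u)\<^sup>2 = 0"
    proof (rule ccontr)
      assume "(norm u)\<^sup>2 \<noteq> 0"
      hence pos: "(norm u)\<^sup>2 > 0" by simp
      define t where "t = (\<bar>u \<bullet> (a - b)\<bar> + 1) / (norm u)\<^sup>2"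
      have "(2 * t - K * t\<^sup>2) * (norm u)\<^sup>2 = 2 * (\<bar>u \<bullet> (a - b)\<bar> + 1)"
        using K0 pos by (simp add: t_def)
      with key[of t] show False by simp
    qed
    then show ?thesis using K0 u_def by simp
  qed
qed

lemma sqdiff: "(norm (y::'a::real_inner))\<^sup>2 - (norm x)\<^sup>2 - 2 * (x \<bullet> (y - x)) = (norm (y - x))\<^sup>2"
  by (simp add: power2_norm_eq_inner inner_diff_left inner_diff_right inner_commute)

lemma interp:
  fixes f :: "'a::euclidean_space \<Rightarrow> real"
  assumes hg: "has_gradient f g" and ls: "L_smooth L g" and sc: "strongly_convex_grad \<mu> f g"
    and gw: "g w = 0" and "0 < \<mu>" and "\<mu> \<le> L"
  shows "(norm (g x))\<^sup>2 - (L + \<mu>) * (g x \<bullet> (x - w)) + L * \<mu> * (norm (x - w))\<^sup>2 \<le> 0"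
proof -
  define h where "h = (\<lambda>y. f y - \<mu> / 2 * (norm y)\<^sup>2)"
  define G where "G = (\<lambda>y. g y - \<mu> *\<^sub>R y)"
  have lin: "h y - h x - G x \<bullet> (y - x) = (f y - f x - g x \<bullet> (y - x)) - \<mu> / 2 * (norm (y - x))\<^sup>2" for x y
  proof -
    have "h y - h x - G x \<bullet> (y - x) = (f y - f x - g x \<bullet> (y - x)) - \<mu> / 2 * ((norm y)\<^sup>2 - (norm x)\<^sup>2 - 2 * (x \<bullet> (y - x)))"
      unfolding h_def G_def by (simp add: inner_diff_left algebra_simps)
    then show ?thesis by (simp add: sqdiff)
  qed
  have lo: "h y \<ge> h x + G x \<bullet> (y - x)" for x y
    using lin[where x=x and y=y] sc unfolding strongly_convex_grad_def by (smt (verit))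
  have up: "h y \<le> h x + G x \<bullet> (y - x) + (L - \<mu>) / 2 * (norm (y - x))\<^sup>2" for x y
  proof -
    have "f y - f x - g x \<bullet> (y - x) \<le> L / 2 * (norm (y - x))\<^sup>2"
      using descent[OF hg ls, where x=x and y=y] by simp
    then show ?thesis using lin[where x=x and y=y] by (simp add: algebra_simps diff_divide_distrib)
  qed
  have cc: "(norm (G x - G w))\<^sup>2 \<le> (L - \<mu>) * ((G x - G w) \<bullet> (x - w))"
    by (rule cocoercive[OF lo up]) (use assms in simp)
  define d where "d = x - w"
  have Gd: "G x - G w = g x - \<mu> *\<^sub>R d" unfolding G_def d_def using gw by (simp add: algebra_simps)
  have e1: "(norm (g x - \<mu> *\<^sub>R d))\<^sup>2 = (norm (g x))\<^sup>2 - 2 * \<mu> * (g x \<bullet> d) + \<mu>\<^sup>2 * (norm d)\<^sup>2"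
    unfolding power2_norm_eq_inner by (simp add: inner_diff_left inner_diff_right inner_commute algebra_simps power2_eq_square)
  have e2: "(g x - \<mu> *\<^sub>R d) \<bullet> d = g x \<bullet> d - \<mu> * (norm d)\<^sup>2"
    by (simp add: power2_norm_eq_inner inner_diff_left)
  show ?thesis using cc unfolding Gd e1 e2 d_def[symmetric]
    by (simp add: algebra_simps power2_eq_square)
qed

lemma grad_zero:
  fixes F :: "'a::euclidean_space \<Rightarrow> real"
  assumes up: "\<And>x y. F y \<le> F x + G x \<bullet> (y - x) + L / 2 * (norm (y - x))\<^sup>2"
    and L: "L > 0" and mn: "\<And>v. F w \<le> F v"
  shows "G w = 0"
proof -
  have "F w \<le> F (w - (1/L) *\<^sub>R G w)" by (rule mn)
  also have "\<dots> \<le> F w + G w \<bullet> ((w - (1/L) *\<^sub>R G w) - w) + L / 2 * (norm ((w - (1/L) *\<^sub>R G w) - w))\<^sup>2"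
    by (rule up)
  also have "\<dots> = F w + G w \<bullet> (- (1/L) *\<^sub>R G w) + L / 2 * (norm ((1/L) *\<^sub>R G w))\<^sup>2"
    by simp
  also have "\<dots> = F w - (norm (G w))\<^sup>2 / (2 * L)"
    using L by (simp add: power2_norm_eq_inner[symmetric] power_mult_distrib power2_eq_square field_simps)
  finally have "(norm (G w))\<^sup>2 / (2 * L) \<le> 0" by simp
  hence "(norm (G w))\<^sup>2 \<le> 0" using L by (simp add: divide_le_0_iff)
  then show ?thesis by simp
qed

theorem lemma2:
  fixes f :: "nat \<Rightarrow> 'a::euclidean_space \<Rightarrow> real"
    and g :: "nat \<Rightarrow> 'a \<Rightarrow> 'a"
    and wstar :: "nat \<Rightarrow> 'a"
    and a :: "nat \<Rightarrow> nat \<Rightarrow> real"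
    and \<mu> L C :: real
  assumes "0 < \<mu>" and "\<mu> \<le> L" and "0 < C"
    and "\<And>t. t \<ge> 1 \<Longrightarrow> has_gradient (f t) (g t)"
    and "\<And>t. t \<ge> 1 \<Longrightarrow> L_smooth L (g t)"
    and "\<And>t. t \<ge> 1 \<Longrightarrow> strongly_convex_grad \<mu> (f t) (g t)"
    and "\<And>t. t \<ge> 1 \<Longrightarrow> is_minimizer (f t) (wstar t)"
    and "\<And>t. t \<ge> 1 \<Longrightarrow> norm (wstar t) \<le> C"
    and "\<And>t i. t \<ge> 1 \<Longrightarrow> i \<in> {1..t} \<Longrightarrow> a i t \<in> {0..1}"
    and "\<And>t. t \<ge> 1 \<Longrightarrow> (\<Sum>i=1..t. a i t) = 1"
  shows "\<forall>t\<ge>1. \<forall>wbar. is_minimizer (\<lambda>w. \<Sum>i=1..t. a i t * f i w) wbar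
            \<longrightarrow> (norm wbar)\<^sup>2 \<le> L / \<mu> * C\<^sup>2"
proof (intro allI impI)
  fix t :: nat and x :: 'a
  assume t: "1 \<le> t" and mx: "is_minimizer (\<lambda>w. \<Sum>i=1..t. a i t * f i w) x"
  note hg = assms(4) and ls = assms(5) and sc = assms(6) and mn = assms(7) and bd = assms(8)
  have Lpos: "L > 0" using assms(1,2) by simp
  define I where "I = {1..t}"
  have fin: "finite I" unfolding I_def by simp
  have i1: "i \<ge> 1" if "i \<in> I" for i using that unfolding I_def by simp
  have a0: "a i t \<ge> 0" if "i \<in> I" for i using assms(9)[OF t, of i] that unfolding I_def by simp
  have asum: "(\<Sum>i\<in>I. a i t) = 1" using assms(10)[OF t] unfolding I_def by simp
  have gz: "g i (wstar i) = 0" if "i \<in> I" for i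
    by (rule grad_zero[where F="f i" and L=L])
      (use descent[OF hg[OF i1[OF that]] ls[OF i1[OF that]]] Lpos mn[OF i1[OF that]] in
        \<open>auto simp: is_minimizer_def\<close>)
  define S where "S = (\<lambda>y. \<Sum>i\<in>I. a i t *\<^sub>R g i y)"
  have Fup: "(\<Sum>i\<in>I. a i t * f i y) \<le> (\<Sum>i\<in>I. a i t * f i x') + S x' \<bullet> (y - x') + L / 2 * (norm (y - x'))\<^sup>2" for x' y
  proof -
    have "(\<Sum>i\<in>I. a i t * f i y) \<le> (\<Sum>i\<in>I. a i t * (f i x' + g i x' \<bullet> (y - x') + L / 2 * (norm (y - x'))\<^sup>2))"
      by (rule sum_mono, rule mult_left_mono) (use a0 descent[OF hg[OF i1] ls[OF i1]] in simp_all)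
    also have "\<dots> = (\<Sum>i\<in>I. a i t * f i x') + (\<Sum>i\<in>I. a i t * (g i x' \<bullet> (y - x'))) + (\<Sum>i\<in>I. a i t) * (L / 2 * (norm (y - x'))\<^sup>2)"
      by (simp add: distrib_left sum.distrib sum_distrib_right)
    also have "(\<Sum>i\<in>I. a i t * (g i x' \<bullet> (y - x'))) = S x' \<bullet> (y - x')"
      unfolding S_def by (simp add: inner_sum_left)
    finally show ?thesis using asum by simp
  qed
  have S0: "S x = 0"
    by (rule grad_zero[where F="\<lambda>w. \<Sum>i\<in>I. a i t * f i w" and L=L])
      (use Fup Lpos mx in \<open>auto simp: is_minimizer_def I_def\<close>)
  have Q: "(norm (g i x))\<^sup>2 - (L + \<mu>) * (g i x \<bullet> (x - wstar i)) + L * \<mu> * (norm (x - wstar i))\<^sup>2 \<le> 0"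
    if "i \<in> I" for i
    by (rule interp[OF hg ls sc gz]) (use that i1 assms(1,2) in auto)
  have zb: "(norm (wstar i))\<^sup>2 \<le> C\<^sup>2" if "i \<in> I" for i
    using bd[OF i1[OF that]] by (simp add: power_mono)
  show "(norm x)\<^sup>2 \<le> L / \<mu> * C\<^sup>2"
  proof (cases "L = \<mu>")
    case True
    have eq: "g i x = \<mu> *\<^sub>R (x - wstar i)" if "i \<in> I" for i
    proof -
      have "(norm (g i x - \<mu> *\<^sub>R (x - wstar i)))\<^sup>2 = (norm (g i x))\<^sup>2 - (L + \<mu>) * (g i x \<bullet> (x - wstar i)) + L * \<mu> * (norm (x - wstar i))\<^sup>2"
        unfolding power2_norm_eq_inner True
        by (simp add: inner_diff_left inner_diff_right inner_commute algebra_simps power2_eq_square)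
      with Q[OF that] have "(norm (g i x - \<mu> *\<^sub>R (x - wstar i)))\<^sup>2 \<le> 0" by simp
      then show ?thesis by simp
    qed
    have "S x = (\<Sum>i\<in>I. (a i t * \<mu>) *\<^sub>R (x - wstar i))"
      unfolding S_def using eq by (intro sum.cong) auto
    also have "\<dots> = \<mu> *\<^sub>R (x - (\<Sum>i\<in>I. a i t *\<^sub>R wstar i))"
    proof -
      have e1: "(\<Sum>i\<in>I. a i t * \<mu>) = \<mu>" using asum by (simp add: sum_distrib_right[symmetric])
      have e2: "(\<Sum>i\<in>I. (a i t * \<mu>) *\<^sub>R wstar i) = \<mu> *\<^sub>R (\<Sum>i\<in>I. a i t *\<^sub>R wstar i)"
        by (simp add: scaleR_sum_right mult.commute)
      show ?thesis by (simp add: scaleR_diff_right sum_subtractf scaleR_sum_left[symmetric] e1 e2)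
    qed
    finally have "x = (\<Sum>i\<in>I. a i t *\<^sub>R wstar i)" using S0 assms(1) by simp
    hence "norm x \<le> (\<Sum>i\<in>I. a i t * norm (wstar i))"
      using a0 by (auto intro!: order.trans[OF norm_sum] sum_mono)
    also have "\<dots> \<le> (\<Sum>i\<in>I. a i t * C)"
      by (rule sum_mono, rule mult_left_mono) (use bd i1 a0 in auto)
    also have "\<dots> = C" using asum by (simp add: sum_distrib_right[symmetric])
    finally have "(norm x)\<^sup>2 \<le> C\<^sup>2" by (simp add: power_mono)
    then show ?thesis using True assms(1) by simp
  next
    case False
    hence Lgt: "L > \<mu>" using assms(2) by simp
    define m where "m = (L + \<mu>) / 2"
    define p where "p = L * \<mu> / m"
    have mpos: "m > 0" using assms(1,2) unfolding m_def by simp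
    have pm: "p * m = L * \<mu>" unfolding p_def using mpos by simp
    have rho: "m\<^sup>2 - L * \<mu> > 0"
    proof -
      have "m\<^sup>2 - L * \<mu> = ((L - \<mu>) / 2)\<^sup>2" unfolding m_def by (simp add: power2_eq_square field_simps)
      then show ?thesis using Lgt by simp
    qed
    have per: "(L * \<mu> - p\<^sup>2) * (norm x)\<^sup>2 - (m\<^sup>2 - L * \<mu>) * (norm (wstar i))\<^sup>2 \<le> 2 * (m - p) * (g i x \<bullet> x)"
      if "i \<in> I" for i
    proof -
      define G where "G = g i x"
      define z where "z = wstar i"
      have nn: "0 \<le> (norm (G - (p *\<^sub>R x - m *\<^sub>R z)))\<^sup>2" by simp
      have e: "(norm (G - (p *\<^sub>R x - m *\<^sub>R z)))\<^sup>2 = G \<bullet> G - 2 * p * (G \<bullet> x) + 2 * m * (G \<bullet> z) + p\<^sup>2 * (x \<bullet> x) - 2 * (p * m) * (x \<bullet> z) + m\<^sup>2 * (z \<bullet> z)"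
        unfolding power2_norm_eq_inner
        by (simp add: inner_diff_left inner_diff_right inner_commute algebra_simps power2_eq_square)
      have q: "G \<bullet> G - (L + \<mu>) * (G \<bullet> x - G \<bullet> z) + L * \<mu> * (x \<bullet> x - 2 * (x \<bullet> z) + z \<bullet> z) \<le> 0"
        using Q[OF that] unfolding G_def[symmetric] z_def[symmetric] power2_norm_eq_inner
        by (simp add: inner_diff_left inner_diff_right inner_commute algebra_simps)
      have nn2: "0 \<le> G \<bullet> G - 2 * p * (G \<bullet> x) + 2 * m * (G \<bullet> z) + p\<^sup>2 * (x \<bullet> x) - 2 * (L * \<mu>) * (x \<bullet> z) + m\<^sup>2 * (z \<bullet> z)"
        using nn e pm by simp
      have Lm: "L + \<mu> = 2 * m" unfolding m_def by simp
      have q2: "G \<bullet> G - 2 * m * (G \<bullet> x) + 2 * m * (G \<bullet> z) + L * \<mu> * (x \<bullet> x) - 2 * (L * \<mu>) * (x \<bullet> z) + L * \<mu> * (z \<bullet> z) \<le> 0"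
        using q unfolding Lm by (simp add: algebra_simps)
      have "(L * \<mu> - p\<^sup>2) * (x \<bullet> x) - (m\<^sup>2 - L * \<mu>) * (z \<bullet> z) = L * \<mu> * (x \<bullet> x) - p\<^sup>2 * (x \<bullet> x) - m\<^sup>2 * (z \<bullet> z) + L * \<mu> * (z \<bullet> z)"
        by (simp add: algebra_simps)
      moreover have "2 * (m - p) * (G \<bullet> x) = 2 * m * (G \<bullet> x) - 2 * p * (G \<bullet> x)" by (simp add: algebra_simps)
      ultimately have "(L * \<mu> - p\<^sup>2) * (x \<bullet> x) - (m\<^sup>2 - L * \<mu>) * (z \<bullet> z) \<le> 2 * (m - p) * (G \<bullet> x)"
        using nn2 q2 by linarith
      then show ?thesis unfolding G_def z_def power2_norm_eq_inner .
    qed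
    have "(\<Sum>i\<in>I. a i t * ((L * \<mu> - p\<^sup>2) * (norm x)\<^sup>2 - (m\<^sup>2 - L * \<mu>) * (norm (wstar i))\<^sup>2))
          \<le> (\<Sum>i\<in>I. a i t * (2 * (m - p) * (g i x \<bullet> x)))"
      by (rule sum_mono, rule mult_left_mono) (use per a0 in auto)
    also have "\<dots> = 2 * (m - p) * (S x \<bullet> x)"
      unfolding S_def by (simp add: inner_sum_left sum_distrib_left algebra_simps)
    also have "\<dots> = 0" using S0 by simp
    finally have s1: "(\<Sum>i\<in>I. a i t * ((L * \<mu> - p\<^sup>2) * (norm x)\<^sup>2 - (m\<^sup>2 - L * \<mu>) * (norm (wstar i))\<^sup>2)) \<le> 0" .
    have s2: "(\<Sum>i\<in>I. a i t * ((L * \<mu> - p\<^sup>2) * (norm x)\<^sup>2 - (m\<^sup>2 - L * \<mu>) * (norm (wstar i))\<^sup>2))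
       = (L * \<mu> - p\<^sup>2) * (norm x)\<^sup>2 - (m\<^sup>2 - L * \<mu>) * (\<Sum>i\<in>I. a i t * (norm (wstar i))\<^sup>2)"
    proof -
      have gen: "(\<Sum>i\<in>I. a i t * (c - d * zz i)) = c * (\<Sum>i\<in>I. a i t) - d * (\<Sum>i\<in>I. a i t * zz i)" for c d :: real and zz
        by (simp add: right_diff_distrib sum_subtractf sum_distrib_left sum_distrib_right mult.commute mult.left_commute)
      show ?thesis using gen[of "(L * \<mu> - p\<^sup>2) * (norm x)\<^sup>2" "m\<^sup>2 - L * \<mu>" "\<lambda>i. (norm (wstar i))\<^sup>2"] asum by simp
    qed
    have s3: "(\<Sum>i\<in>I. a i t * (norm (wstar i))\<^sup>2) \<le> C\<^sup>2"
    proof -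
      have "(\<Sum>i\<in>I. a i t * (norm (wstar i))\<^sup>2) \<le> (\<Sum>i\<in>I. a i t * C\<^sup>2)"
        by (rule sum_mono, rule mult_left_mono) (use zb a0 in auto)
      also have "\<dots> = C\<^sup>2" using asum by (simp add: sum_distrib_right[symmetric])
      finally show ?thesis .
    qed
    have lp: "L * \<mu> - p\<^sup>2 = L * \<mu> * (m\<^sup>2 - L * \<mu>) / m\<^sup>2"
      unfolding p_def using mpos by (simp add: power2_eq_square field_simps)
    have "(L * \<mu> - p\<^sup>2) * (norm x)\<^sup>2 \<le> (m\<^sup>2 - L * \<mu>) * C\<^sup>2"
      using s1 s2 s3 rho by (smt (verit) mult_left_mono)
    hence "L * \<mu> * (m\<^sup>2 - L * \<mu>) / m\<^sup>2 * (norm x)\<^sup>2 \<le> (m\<^sup>2 - L * \<mu>) * C\<^sup>2" using lp by simp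
    moreover have "L * \<mu> * (m\<^sup>2 - L * \<mu>) / m\<^sup>2 * (norm x)\<^sup>2 = (m\<^sup>2 - L * \<mu>) * (L * \<mu> / m\<^sup>2 * (norm x)\<^sup>2)"
      by (simp add: mult_ac)
    ultimately have "(m\<^sup>2 - L * \<mu>) * (L * \<mu> / m\<^sup>2 * (norm x)\<^sup>2) \<le> (m\<^sup>2 - L * \<mu>) * C\<^sup>2" by (simp only:)
    hence "L * \<mu> / m\<^sup>2 * (norm x)\<^sup>2 \<le> C\<^sup>2" using mult_le_cancel_left_pos[OF rho] by blast
    hence x1: "(norm x)\<^sup>2 \<le> m\<^sup>2 / (L * \<mu>) * C\<^sup>2" using mpos Lpos assms(1)
      by (simp add: field_simps)
    have "m \<le> L" unfolding m_def using assms(2) by simp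
    hence "m\<^sup>2 \<le> L\<^sup>2" using mpos by (simp add: power_mono)
    hence "m\<^sup>2 / (L * \<mu>) \<le> L / \<mu>" using Lpos assms(1)
      by (simp add: field_simps power2_eq_square)
    hence "m\<^sup>2 / (L * \<mu>) * C\<^sup>2 \<le> L / \<mu> * C\<^sup>2" by (rule mult_right_mono) simp
    then show ?thesis using x1 by simp
  qed
qed
end
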